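(* Let $X\colon[0,T]\to\mathbb{R}^d$ be a c\`adl\`ag path which has finite $p$-variation for every $p>2$, and let $q\in(2,3)$. Then there is a constant $C>0$ (not depending on $n$, $s$, $t$ or $c$) such that for every super-additive function $c\colon \Delta_T\to [0,\infty)$ with $|X_t-X_s|^q \leq c(s,t)$ for all $(s,t) \in \Delta_T$, every $n\in\mathbb{N}$ and every $(s,t)\in\Delta_T$, $$\bigg|\int_0^{t} X^n_r \otimes \mathrm{d} X_r-\int_0^{s} X^n_r \otimes \mathrm{d} X_r-X_s \otimes (X_t-X_s)\bigg | \le C \max\big\{2^{-n} c(s,t)^{1/q},\ 2^{n (q-2)} c(s,t) + c(s,t)^{2/q}\big\}.$$
   Context: $|\cdot|$ is the Euclidean norm; $\Delta_T=\{(s,t):0\le s\le t\le T\}$. A function $c\colon\Delta_T\to[0,\infty)$ is super-additive if $c(s,u)+c(u,t)\le c(s,t)$ for $0\le s\le u\le t\le T$. Dyadic approximation: $\tau^n_0:=0$, $\tau^n_{k+1}:=\inf\{t\ge\tau^n_k: |X_t-X_{\tau^n_k}|\ge 2^{-n}\}$, $X^n_t:=\sum_{k\ge0}X_{\tau^n_k}\mathbf{1}_{(\tau^n_k,\tau^n_{k+1}]}(t)$, and $\int_0^t X^n_r\otimes\mathrm{d}X_r:=\sum_{k\ge0}X_{\tau^n_k}\otimes(X_{\tau^n_{k+1}\wedge t}-X_{\tau^n_k\wedge t})$. *)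

theory Defs
  imports "HOL-Analysis.Analysis"
begin

text \<open>Tensor (outer) product in R^d (x) R^d, realised as a d x d matrix;
  the norm on real^'d^'d is the Euclidean (Frobenius / Hilbert-Schmidt) norm.\<close>
definition tensor :: "real^'d \<Rightarrow> real^'d \<Rightarrow> real^'d^'d" (infixl "\<otimes>\<^sub>t" 70) where
  "x \<otimes>\<^sub>t y = (\<chi> i j. x $ i * y $ j)"

definition cadlag :: "real \<Rightarrow> (real \<Rightarrow> 'a::topological_space) \<Rightarrow> bool" where
  "cadlag T X \<longleftrightarrow>
     (\<forall>t\<in>{0..<T}. (X \<longlongrightarrow> X t) (at_right t)) \<and>
     (\<forall>t\<in>{0<..T}. \<exists>l. (X \<longlongrightarrow> l) (at_left t))"

definition finite_pvar :: "real \<Rightarrow> real \<Rightarrow> (real \<Rightarrow> 'a::real_normed_vector) \<Rightarrow> bool" where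
  "finite_pvar p T X \<longleftrightarrow>
     (\<exists>M. \<forall>m::nat. \<forall>tt::nat \<Rightarrow> real.
        tt 0 = 0 \<and> tt m = T \<and> (\<forall>i<m. tt i < tt (Suc i)) \<longrightarrow>
        (\<Sum>i<m. norm (X (tt (Suc i)) - X (tt i)) powr p) \<le> M)"

text \<open>Dyadic hitting times (values in ereal; inf of the empty set is +infinity).\<close>
fun tau :: "real \<Rightarrow> (real \<Rightarrow> 'a::real_normed_vector) \<Rightarrow> nat \<Rightarrow> nat \<Rightarrow> ereal" where
  "tau T X n 0 = 0"
| "tau T X n (Suc k) =
     Inf (ereal ` {t\<in>{0..T}. tau T X n k \<le> ereal t \<and>
                     norm (X t - X (real_of_ereal (tau T X n k))) \<ge> 2 powr (- real n)})"

definition Xstop :: "(real \<Rightarrow> 'a) \<Rightarrow> ereal \<Rightarrow> real \<Rightarrow> 'a" where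
  "Xstop X \<sigma> t = X (real_of_ereal (min \<sigma> (ereal t)))"

text \<open>int_0^t X^n_r (x) dX_r := sum_k X_{tau_k} (x) (X_{tau_{k+1} \<and> t} - X_{tau_k \<and> t}).
  Summands with tau_k = +infinity vanish.\<close>
definition dyadic_int :: "real \<Rightarrow> (real \<Rightarrow> real^'d) \<Rightarrow> nat \<Rightarrow> real \<Rightarrow> real^'d^'d" where
  "dyadic_int T X n t =
     (\<Sum>k. X (real_of_ereal (tau T X n k)) \<otimes>\<^sub>t
            (Xstop X (tau T X n (Suc k)) t - Xstop X (tau T X n k) t))"

definition superadditive :: "real \<Rightarrow> (real \<Rightarrow> real \<Rightarrow> real) \<Rightarrow> bool" where
  "superadditive T c \<longleftrightarrow>
     (\<forall>s u t. 0 \<le> s \<and> s \<le> u \<and> u \<le> t \<and> t \<le> T \<longrightarrow> c s u + c u t \<le> c s t)"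

end

theory Submission
  imports Defs "HOL-Analysis.Analysis"
begin


lemma tensor_diff_left: "(x - y) \<otimes>\<^sub>t z = x \<otimes>\<^sub>t z - y \<otimes>\<^sub>t z"
  by (simp add: tensor_def vec_eq_iff algebra_simps)
lemma tensor_diff_right: "z \<otimes>\<^sub>t (x - y) = z \<otimes>\<^sub>t x - z \<otimes>\<^sub>t y"
  by (simp add: tensor_def vec_eq_iff algebra_simps)
lemma tensor_add_left: "(x + y) \<otimes>\<^sub>t z = x \<otimes>\<^sub>t z + y \<otimes>\<^sub>t z"
  by (simp add: tensor_def vec_eq_iff algebra_simps)
lemma tensor_zero_right[simp]: "z \<otimes>\<^sub>t 0 = 0"
  by (simp add: tensor_def vec_eq_iff)
lemma tensor_zero_left[simp]: "0 \<otimes>\<^sub>t z = 0"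
  by (simp add: tensor_def vec_eq_iff)
lemma tensor_sum_right: "z \<otimes>\<^sub>t (\<Sum>k\<in>A. f k) = (\<Sum>k\<in>A. z \<otimes>\<^sub>t f k)"
  by (induction A rule: infinite_finite_induct) (auto simp: tensor_def vec_eq_iff algebra_simps sum_distrib_left)
lemma norm_tensor: "norm (x \<otimes>\<^sub>t y) = norm x * norm y"
proof -
  have "x \<otimes>\<^sub>t y = (\<chi> i. x $ i *\<^sub>R y)" by (simp add: tensor_def vec_eq_iff)
  then have "norm (x \<otimes>\<^sub>t y) = L2_set (\<lambda>i. norm (x $ i *\<^sub>R y)) UNIV"
    by (simp only: norm_vec_def vec_lambda_beta)
  also have "\<dots> = L2_set (\<lambda>i. \<bar>x $ i\<bar> * norm y) UNIV"
    by (simp only: norm_scaleR)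
  also have "\<dots> = norm y * L2_set (\<lambda>i. \<bar>x $ i\<bar>) UNIV"
    by (simp add: L2_set_right_distrib mult.commute)
  also have "L2_set (\<lambda>i. \<bar>x $ i\<bar>) UNIV = norm x"
    by (simp add: norm_vec_def L2_set_def)
  finally show ?thesis by simp
qed


lemma mvt_powr:
  fixes b :: real and m :: nat
  assumes "0 < b" "b < 1" "1 \<le> m"
  shows "b * real m powr (b - 1) \<le> real m powr b - (real m - 1) powr b"
proof (cases "m = 1")
  case True then show ?thesis using assms by simp
next
  case False
  then have m2: "2 \<le> real m" using assms by simp
  have "\<exists>z. real m - 1 < z \<and> z < real m \<and> real m powr b - (real m - 1) powr b = (real m - (real m - 1)) * (b * z powr (b - 1))"
  proof (rule MVT2)
    show "real m - 1 < real m" by simp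
    fix x assume "real m - 1 \<le> x" "x \<le> real m"
    then show "((\<lambda>x. x powr b) has_real_derivative b * x powr (b - 1)) (at x)"
      using m2 by (auto intro!: derivative_eq_intros)
  qed
  then obtain z where z: "real m - 1 < z" "z < real m" "real m powr b - (real m - 1) powr b = b * z powr (b - 1)"
    by auto
  have "real m powr (b - 1) \<le> z powr (b - 1)"
    using z m2 assms by (intro powr_mono2') auto
  then show ?thesis using z assms by simp
qed


definition ctrl :: "real \<Rightarrow> real \<Rightarrow> (real \<Rightarrow> real^'d) \<Rightarrow> (real \<Rightarrow> real \<Rightarrow> real) \<Rightarrow> bool" where
  "ctrl T q X c \<longleftrightarrow> superadditive T c \<and>
    (\<forall>s t. 0 \<le> s \<and> s \<le> t \<and> t \<le> T \<longrightarrow> 0 \<le> c s t) \<and>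
    (\<forall>s t. 0 \<le> s \<and> s \<le> t \<and> t \<le> T \<longrightarrow> norm (X t - X s) powr q \<le> c s t)"

lemma ctrl_nonneg: "ctrl T q X c \<Longrightarrow> 0 \<le> s \<Longrightarrow> s \<le> t \<Longrightarrow> t \<le> T \<Longrightarrow> 0 \<le> c s t"
  by (simp add: ctrl_def)

lemma ctrl_super: "ctrl T q X c \<Longrightarrow> 0 \<le> s \<Longrightarrow> s \<le> u \<Longrightarrow> u \<le> t \<Longrightarrow> t \<le> T \<Longrightarrow> c s u + c u t \<le> c s t"
  by (simp add: ctrl_def superadditive_def)

lemma ctrl_mono:
  assumes "ctrl T q X c" "0 \<le> s" "s \<le> u" "u \<le> v" "v \<le> t" "t \<le> T"
  shows "c u v \<le> c s t"
proof -
  have "c s u + c u t \<le> c s t" using assms by (intro ctrl_super) auto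
  moreover have "c u v + c v t \<le> c u t" using assms by (intro ctrl_super) auto
  moreover have "0 \<le> c s u" "0 \<le> c v t" using assms by (auto intro: ctrl_nonneg)
  ultimately show ?thesis by linarith
qed

lemma ctrl_norm:
  assumes "ctrl T q X c" "0 < q" "0 \<le> u" "u \<le> v" "v \<le> T"
  shows "norm (X v - X u) \<le> c u v powr (1/q)"
proof -
  have "norm (X v - X u) = (norm (X v - X u) powr q) powr (1/q)"
    using assms by (simp add: powr_powr)
  also have "\<dots> \<le> c u v powr (1/q)"
    using assms unfolding ctrl_def by (intro powr_mono2) auto
  finally show ?thesis .
qed

lemma ctrl_chain:
  assumes "ctrl T q X c" "0 \<le> Q 0" "\<forall>i j. i \<le> j \<longrightarrow> j \<le> r \<longrightarrow> Q i \<le> Q j" "Q r \<le> T"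
  shows "(\<Sum>i<r. c (Q i) (Q (Suc i))) \<le> c (Q 0) (Q r)"
  using assms(3,4)
proof (induction r)
  case 0
  then show ?case using assms by (auto intro: ctrl_nonneg)
next
  case (Suc r)
  have m: "Q r \<le> Q (Suc r)" "Q 0 \<le> Q r" using Suc.prems by auto
  then have "Q r \<le> T" using Suc.prems by linarith
  then have "(\<Sum>i<r. c (Q i) (Q (Suc i))) \<le> c (Q 0) (Q r)"
    using Suc by auto
  moreover have "c (Q 0) (Q r) + c (Q r) (Q (Suc r)) \<le> c (Q 0) (Q (Suc r))"
    using assms Suc.prems m by (intro ctrl_super) auto
  ultimately show ?case by simp
qed

definition Sw :: "(real \<Rightarrow> real^'d) \<Rightarrow> (nat \<Rightarrow> real) \<Rightarrow> nat \<Rightarrow> real^'d^'d" where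
  "Sw X Q m = (\<Sum>i<m. (X (Q i) - X (Q 0)) \<otimes>\<^sub>t (X (Q (Suc i)) - X (Q i)))"

lemma tensor_identity:
  "(a - z) \<otimes>\<^sub>t (b - a) + (b - z) \<otimes>\<^sub>t (d - b) = (a - z) \<otimes>\<^sub>t (d - a) + (b - a) \<otimes>\<^sub>t (d - b)"
  by (simp add: tensor_def vec_eq_iff algebra_simps)

lemma Sw_remove:
  assumes "k < n"
  shows "Sw X Q (Suc n) = Sw X (\<lambda>i. if i \<le> k then Q i else Q (Suc i)) n
     + (X (Q (Suc k)) - X (Q k)) \<otimes>\<^sub>t (X (Q (Suc (Suc k))) - X (Q (Suc k)))"
proof -
  define Q' where "Q' = (\<lambda>i. if i \<le> k then Q i else Q (Suc i))"
  define f where "f = (\<lambda>i. (X (Q i) - X (Q 0)) \<otimes>\<^sub>t (X (Q (Suc i)) - X (Q i)))"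
  have "Suc k \<le> n" using assms by simp
  then have "Sw X Q (Suc n) = Sw X Q' n
     + (X (Q (Suc k)) - X (Q k)) \<otimes>\<^sub>t (X (Q (Suc (Suc k))) - X (Q (Suc k)))"
  proof (induction n rule: dec_induct)
    case base
    have 1: "Sw X Q' (Suc k) = (\<Sum>i<k. f i) + (X (Q k) - X (Q 0)) \<otimes>\<^sub>t (X (Q (Suc (Suc k))) - X (Q k))"
      unfolding Sw_def sum.lessThan_Suc by (auto simp: Q'_def f_def intro!: sum.cong)
    have 2: "Sw X Q (Suc (Suc k)) = (\<Sum>i<k. f i) + f k + f (Suc k)"
      unfolding Sw_def f_def by simp
    have 3: "f k + f (Suc k) = (X (Q k) - X (Q 0)) \<otimes>\<^sub>t (X (Q (Suc (Suc k))) - X (Q k))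
       + (X (Q (Suc k)) - X (Q k)) \<otimes>\<^sub>t (X (Q (Suc (Suc k))) - X (Q (Suc k)))"
      unfolding f_def by (rule tensor_identity)
    show ?case unfolding 1 2 by (simp only: add.assoc 3)
  next
    case (step m)
    have "Sw X Q (Suc (Suc m)) = Sw X Q (Suc m) + f (Suc m)" unfolding Sw_def f_def by simp
    moreover have "Sw X Q' (Suc m) = Sw X Q' m + f (Suc m)"
      unfolding Sw_def f_def using step(1,2) by (simp add: Q'_def)
    ultimately show ?case using step(3) by simp
  qed
  then show ?thesis by (simp add: Q'_def)
qed



lemma sewing:
  fixes X :: "real \<Rightarrow> real^'d"
  assumes ct: "ctrl T q X c" and q: "2 < q" and m1: "1 \<le> m"
  shows "\<forall>Q. 0 \<le> Q 0 \<and> Q m \<le> T \<and> (\<forall>i j. i \<le> j \<longrightarrow> j \<le> m \<longrightarrow> Q i \<le> Q j) \<longrightarrow>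
    norm (Sw X Q m) \<le> (2 powr (2/q) / (1 - 2/q)) * c (Q 0) (Q m) powr (2/q) * (real m - 1) powr (1 - 2/q)"
  using m1
proof (induction m rule: nat_induct_at_least)
  case base
  show ?case by (simp add: Sw_def)
next
  case (Suc n)
  define A where "A = 2 powr (2/q) / (1 - 2/q)"
  define b where "b = 1 - 2/q"
  have b: "0 < b" "b < 1" using q by (auto simp: b_def)
  have Ab: "A * b = 2 powr (2/q)" using b by (simp add: A_def b_def)
  have Apos: "0 \<le> A" using b by (simp add: A_def b_def)
  show ?case
  proof (intro allI impI)
    fix Q assume H: "0 \<le> Q 0 \<and> Q (Suc n) \<le> T \<and> (\<forall>i j. i \<le> j \<longrightarrow> j \<le> Suc n \<longrightarrow> Q i \<le> Q j)"
    then have Q0: "0 \<le> Q 0" and QT: "Q (Suc n) \<le> T" and Qm: "\<And>i j. i \<le> j \<Longrightarrow> j \<le> Suc n \<Longrightarrow> Q i \<le> Q j"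
      by auto
    have Qin: "0 \<le> Q i" "Q i \<le> T" if "i \<le> Suc n" for i
      using Qm[of 0 i] Qm[of i "Suc n"] that Q0 QT by auto
    define cc where "cc = c (Q 0) (Q (Suc n))"
    define g where "g = (\<lambda>i. c (Q i) (Q (Suc i)))"
    define w where "w = (\<lambda>k. g k + g (Suc k))"
    have gnn: "0 \<le> g i" if "i \<le> n" for i
      unfolding g_def using that Qin[of i] Qin[of "Suc i"] Qm[of i "Suc i"]
      by (intro ctrl_nonneg[OF ct]) auto
    have chain: "(\<Sum>i<Suc n. g i) \<le> cc"
      unfolding g_def cc_def using Q0 QT Qm by (intro ctrl_chain[OF ct]) auto
    have s1: "(\<Sum>k<n. g k) \<le> (\<Sum>k<Suc n. g k)"
      using gnn by simp
    have s2: "(\<Sum>k<n. g (Suc k)) \<le> (\<Sum>k<Suc n. g k)"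
      using gnn[of 0] sum.lessThan_Suc_shift[of g n] by simp
    have sumw: "(\<Sum>k<n. w k) \<le> 2 * cc"
      using s1 s2 chain by (simp add: w_def sum.distrib)
    have "\<exists>k<n. w k \<le> 2 * cc / n"
    proof (rule ccontr)
      assume "\<not> ?thesis"
      then have "\<forall>k\<in>{..<n}. 2 * cc / n < w k" by auto
      then have "(\<Sum>k<n. 2 * cc / n) < (\<Sum>k<n. w k)"
        using Suc.hyps by (intro sum_strict_mono) (auto simp: lessThan_empty_iff)
      then show False using Suc.hyps sumw by simp
    qed
    then obtain k where k: "k < n" "w k \<le> 2 * cc / n" by auto
    define Q' where "Q' = (\<lambda>i. if i \<le> k then Q i else Q (Suc i))"
    have Q'0: "Q' 0 = Q 0" and Q'n: "Q' n = Q (Suc n)" using k by (auto simp: Q'_def)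
    have Q'm: "\<forall>i j. i \<le> j \<longrightarrow> j \<le> n \<longrightarrow> Q' i \<le> Q' j"
      unfolding Q'_def using Qm by auto
    have IH: "norm (Sw X Q' n) \<le> A * cc powr (2/q) * (real n - 1) powr b"
      using Suc.IH[rule_format, of Q'] Q0 QT Q'0 Q'n Q'm
      by (simp add: A_def b_def cc_def)
    have ccnn: "0 \<le> cc" unfolding cc_def using Q0 QT Qm[of 0 "Suc n"]
      by (intro ctrl_nonneg[OF ct]) auto
    have d1: "norm (X (Q (Suc k)) - X (Q k)) \<le> w k powr (1/q)"
    proof -
      have "norm (X (Q (Suc k)) - X (Q k)) \<le> g k powr (1/q)"
        unfolding g_def using k Qin[of k] Qin[of "Suc k"] Qm[of k "Suc k"] q
        by (intro ctrl_norm[OF ct]) auto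
      also have "\<dots> \<le> w k powr (1/q)"
        using k gnn[of k] gnn[of "Suc k"] q by (intro powr_mono2) (auto simp: w_def)
      finally show ?thesis .
    qed
    have d2: "norm (X (Q (Suc (Suc k))) - X (Q (Suc k))) \<le> w k powr (1/q)"
    proof -
      have "norm (X (Q (Suc (Suc k))) - X (Q (Suc k))) \<le> g (Suc k) powr (1/q)"
        unfolding g_def using k Qin[of "Suc k"] Qin[of "Suc (Suc k)"] Qm[of "Suc k" "Suc (Suc k)"] q
        by (intro ctrl_norm[OF ct]) auto
      also have "\<dots> \<le> w k powr (1/q)"
        using k gnn[of k] gnn[of "Suc k"] q by (intro powr_mono2) (auto simp: w_def)
      finally show ?thesis .
    qed
    have wnn: "0 \<le> w k" using k gnn[of k] gnn[of "Suc k"] by (simp add: w_def)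
    have "norm ((X (Q (Suc k)) - X (Q k)) \<otimes>\<^sub>t (X (Q (Suc (Suc k))) - X (Q (Suc k))))
        \<le> w k powr (1/q) * w k powr (1/q)"
      unfolding norm_tensor using d1 d2 by (intro mult_mono) auto
    also have "\<dots> = w k powr (2/q)" by (simp add: powr_add[symmetric])
    also have "\<dots> \<le> (2 * cc / n) powr (2/q)"
      using wnn k q by (intro powr_mono2) auto
    also have "\<dots> = 2 powr (2/q) * cc powr (2/q) * real n powr (b - 1)"
      using ccnn q by (simp add: powr_divide powr_mult b_def powr_minus_divide)
    also have "\<dots> = cc powr (2/q) * (A * (b * real n powr (b - 1)))"
      using Ab by (simp add: algebra_simps)
    also have "\<dots> \<le> cc powr (2/q) * (A * (real n powr b - (real n - 1) powr b))"
      using mvt_powr[OF b, of n] Suc.hyps Apos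
      by (intro mult_left_mono) auto
    finally have tail: "norm ((X (Q (Suc k)) - X (Q k)) \<otimes>\<^sub>t (X (Q (Suc (Suc k))) - X (Q (Suc k))))
        \<le> cc powr (2/q) * (A * (real n powr b - (real n - 1) powr b))" .
    have "norm (Sw X Q (Suc n)) \<le> norm (Sw X Q' n) + norm ((X (Q (Suc k)) - X (Q k)) \<otimes>\<^sub>t (X (Q (Suc (Suc k))) - X (Q (Suc k))))"
      unfolding Sw_remove[OF k(1), of X Q] Q'_def by (rule norm_triangle_ineq)
    also have "\<dots> \<le> A * cc powr (2/q) * (real n - 1) powr b + cc powr (2/q) * (A * (real n powr b - (real n - 1) powr b))"
      using IH tail by linarith
    also have "\<dots> = A * cc powr (2/q) * real n powr b" by (simp add: algebra_simps)
    finally show "norm (Sw X Q (Suc n)) \<le> (2 powr (2/q) / (1 - 2/q)) * c (Q 0) (Q (Suc n)) powr (2/q) * (real (Suc n) - 1) powr (1 - 2/q)"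
      by (simp add: A_def b_def cc_def)
  qed
qed


definition Aset :: "real \<Rightarrow> (real \<Rightarrow> 'a::real_normed_vector) \<Rightarrow> nat \<Rightarrow> nat \<Rightarrow> real set" where
  "Aset T X n k = {t\<in>{0..T}. tau T X n k \<le> ereal t \<and>
       norm (X t - X (real_of_ereal (tau T X n k))) \<ge> 2 powr (- real n)}"

lemma tau_Suc: "tau T X n (Suc k) = Inf (ereal ` Aset T X n k)"
  by (simp add: Aset_def)

lemma tau_nonneg: "0 \<le> tau T X n k"
proof (cases k)
  case 0 then show ?thesis by simp
next
  case (Suc j)
  show ?thesis unfolding Suc tau_Suc by (rule Inf_greatest) (auto simp: Aset_def)
qed

lemma tau_empty: "Aset T X n k = {} \<Longrightarrow> tau T X n (Suc k) = \<infinity>"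
  unfolding tau_Suc by (simp add: top_ereal_def[symmetric])

lemma tau_inf_step: "tau T X n k = \<infinity> \<Longrightarrow> tau T X n (Suc k) = \<infinity>"
  by (rule tau_empty) (auto simp: Aset_def)

lemma tau_attain:
  fixes X :: "real \<Rightarrow> 'a::real_normed_vector"
  assumes rc: "\<forall>t\<in>{0..<T}. (X \<longlongrightarrow> X t) (at_right t)"
    and ta: "tau T X n k = ereal a" and ne: "Aset T X n k \<noteq> {}"
  shows "\<exists>b\<in>Aset T X n k. tau T X n (Suc k) = ereal b \<and> a < b"
proof -
  define A where "A = Aset T X n k"
  define e where "e = (2::real) powr (- real n)"
  have epos: "0 < e" by (simp add: e_def)
  have Ael: "x \<in> A \<longleftrightarrow> x \<in> {0..T} \<and> a \<le> x \<and> e \<le> norm (X x - X a)" for x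
    by (simp add: A_def Aset_def ta e_def)
  have bdd: "bdd_below A" by (rule bdd_belowI[of _ 0]) (auto simp: Ael)
  have neA: "A \<noteq> {}" using ne by (simp add: A_def)
  define b where "b = Inf A"
  have tb: "tau T X n (Suc k) = ereal b"
    unfolding tau_Suc b_def using ereal_Inf'[OF bdd neA] by (simp add: A_def)
  have ab: "a \<le> b" unfolding b_def using neA by (intro cInf_greatest) (auto simp: Ael)
  have bA: "b \<in> A"
  proof (rule ccontr)
    assume nb: "b \<notin> A"
    obtain y0 where y0: "y0 \<in> A" using neA by auto
    have "b \<le> y0" unfolding b_def using bdd y0 by (rule cInf_lower[rotated])
    moreover have "b \<noteq> y0" using nb y0 by auto
    ultimately have by0: "b < y0" by simp
    have "0 \<le> a" using tau_nonneg[of T X n k] ta by simp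
    have b0T: "b \<in> {0..<T}" using by0 y0 ab \<open>0 \<le> a\<close> by (auto simp: Ael)
    then have "b \<in> {0..T}" by auto
    then have lt: "norm (X b - X a) < e" using nb ab by (auto simp: Ael)
    have "((\<lambda>y. norm (X y - X a)) \<longlongrightarrow> norm (X b - X a)) (at_right b)"
      using rc b0T by (intro tendsto_intros) auto
    from order_tendstoD(2)[OF this lt]
    obtain d where d: "d > b" "\<And>y. y > b \<Longrightarrow> y < d \<Longrightarrow> norm (X y - X a) < e"
      unfolding eventually_at_right_field by auto
    have "\<exists>y\<in>A. y < d" using d(1) neA bdd unfolding b_def by (simp add: cInf_less_iff)
    then obtain y where y: "y \<in> A" "y < d" by auto
    have "b \<le> y" unfolding b_def using bdd y(1) by (rule cInf_lower[rotated])
    moreover have "b \<noteq> y" using nb y by auto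
    ultimately have "b < y" by simp
    then have "norm (X y - X a) < e" using d y by auto
    then show False using y by (auto simp: Ael)
  qed
  have "a \<noteq> b" using bA epos by (auto simp: Ael)
  then show ?thesis using bA ab tb by (auto simp: A_def)
qed

lemma tau_below:
  assumes ta: "tau T X n k = ereal a" and u: "0 \<le> u" "u \<le> T" "a \<le> u"
    and lt: "ereal u < tau T X n (Suc k)"
  shows "norm (X u - X a) < 2 powr (- real n)"
proof (rule ccontr)
  assume "\<not> ?thesis"
  then have "u \<in> Aset T X n k" using u by (auto simp: Aset_def ta)
  then have "tau T X n (Suc k) \<le> ereal u" unfolding tau_Suc by (auto intro: Inf_lower)
  then show False using lt by simp
qed

lemma tau_le_T:
  fixes X :: "real \<Rightarrow> 'a::real_normed_vector"
  assumes "0 \<le> T" "tau T X n k = ereal a"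
  shows "a \<le> T"
proof (cases k)
  case 0 then show ?thesis using assms by (simp add: zero_ereal_def)
next
  case (Suc j)
  have ne: "Aset T X n j \<noteq> {}" using tau_empty[of T X n j] assms Suc by auto
  then obtain y where y: "y \<in> Aset T X n j" by auto
  have "tau T X n k \<le> ereal y" unfolding Suc tau_Suc using y by (auto intro: Inf_lower)
  then show ?thesis using y assms by (auto simp: Aset_def)
qed

lemma tau_pred:
  fixes X :: "real \<Rightarrow> 'a::real_normed_vector"
  assumes rc: "\<forall>t\<in>{0..<T}. (X \<longlongrightarrow> X t) (at_right t)"
    and tb: "tau T X n (Suc k) = ereal b"
  shows "\<exists>a. tau T X n k = ereal a \<and> a < b \<and> 2 powr (- real n) \<le> norm (X b - X a)"
proof -
  have "tau T X n k \<noteq> \<infinity>" using tau_inf_step[of T X n k] tb by auto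
  moreover have "tau T X n k \<noteq> - \<infinity>" using tau_nonneg[of T X n k] by auto
  ultimately obtain a where ta: "tau T X n k = ereal a" by (cases "tau T X n k") auto
  have ne: "Aset T X n k \<noteq> {}" using tau_empty[of T X n k] tb by auto
  from tau_attain[OF rc ta ne] obtain b' where "b' \<in> Aset T X n k" "tau T X n (Suc k) = ereal b'" "a < b'"
    by auto
  then show ?thesis using tb ta by (auto simp: Aset_def)
qed

lemma tau_mono_Suc:
  fixes X :: "real \<Rightarrow> 'a::real_normed_vector"
  assumes rc: "\<forall>t\<in>{0..<T}. (X \<longlongrightarrow> X t) (at_right t)"
  shows "tau T X n k \<le> tau T X n (Suc k)"
proof (cases "tau T X n (Suc k)")
  case (real b)
  then show ?thesis using tau_pred[OF rc real] by auto
next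
  case PInf then show ?thesis by simp
next
  case MInf then show ?thesis using tau_nonneg[of T X n "Suc k"] by simp
qed

lemma tau_mono:
  fixes X :: "real \<Rightarrow> 'a::real_normed_vector"
  assumes rc: "\<forall>t\<in>{0..<T}. (X \<longlongrightarrow> X t) (at_right t)" and "j \<le> k"
  shows "tau T X n j \<le> tau T X n k"
  using incseq_SucI[of "tau T X n", OF tau_mono_Suc[OF rc]] assms(2) by (simp add: incseq_def)

lemma tau_count:
  fixes X :: "real \<Rightarrow> real^'d"
  assumes rc: "\<forall>t\<in>{0..<T}. (X \<longlongrightarrow> X t) (at_right t)"
    and ct: "ctrl T q X c" and q: "0 < q" and T: "0 \<le> T"
    and ta: "tau T X n j = ereal a" and jk: "j \<le> k"
  shows "\<forall>b. tau T X n k = ereal b \<longrightarrow> real (k - j) * (2 powr (- real n)) powr q \<le> c a b"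
  using jk
proof (induction k rule: dec_induct)
  case base
  have "0 \<le> a" using tau_nonneg[of T X n j] ta by simp
  moreover have "a \<le> T" using tau_le_T[OF T ta] .
  ultimately show ?case using ta ct by (auto intro: ctrl_nonneg)
next
  case (step k)
  show ?case
  proof (intro allI impI)
    fix b' assume tb': "tau T X n (Suc k) = ereal b'"
    obtain b where tb: "tau T X n k = ereal b" and bb: "b < b'" and nb: "2 powr (- real n) \<le> norm (X b' - X b)"
      using tau_pred[OF rc tb'] by auto
    have IH: "real (k - j) * (2 powr (- real n)) powr q \<le> c a b" using step.IH tb by auto
    have "tau T X n j \<le> tau T X n k" using tau_mono[OF rc step.hyps(1)] .
    then have ab: "a \<le> b" using ta tb by simp
    have a0: "0 \<le> a" using tau_nonneg[of T X n j] ta by simp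
    have b'T: "b' \<le> T" using tau_le_T[OF T tb'] .
    have sup: "c a b + c b b' \<le> c a b'" using ab bb a0 b'T by (intro ctrl_super[OF ct]) auto
    have "(2 powr (- real n)) powr q \<le> norm (X b' - X b) powr q"
      using nb q by (intro powr_mono2) auto
    also have "\<dots> \<le> c b b'" using ct ab bb a0 b'T unfolding ctrl_def by auto
    finally have "(2 powr (- real n)) powr q \<le> c b b'" .
    moreover have "real (Suc k - j) = real (k - j) + 1" using step.hyps(1) by simp
    ultimately show "real (Suc k - j) * (2 powr (- real n)) powr q \<le> c a b'"
      using IH sup by (simp add: algebra_simps)
  qed
qed



declare tau.simps(2)[simp del]

lemma final_arith:
  fixes cc x q :: real
  assumes q: "2 < q" and cc: "0 \<le> cc" and x: "0 \<le> x" and xb: "x \<le> 1 + cc * 2 powr (real n * q)"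
  shows "cc powr (2/q) * x powr (1 - 2/q) \<le> 2 * (cc powr (2/q) + 2 powr (real n * (q - 2)) * cc)"
proof -
  define b where "b = 1 - 2/q"
  define K where "K = cc * 2 powr (real n * q)"
  have b: "0 < b" "b < 1" using q by (auto simp: b_def)
  have K0: "0 \<le> K" using cc by (simp add: K_def)
  have "x powr b \<le> (1 + K) powr b" using x xb b by (intro powr_mono2) (auto simp: K_def)
  also have "\<dots> \<le> 2 * (1 + K powr b)"
  proof (cases "K \<le> 1")
    case True
    have h1: "(1 + K) powr b \<le> 2 powr b" using True K0 b by (intro powr_mono2) auto
    have h2: "2 powr b \<le> (2::real)" using powr_mono[of b 1 "2::real"] b by simp
    have h3: "0 \<le> K powr b" by simp
    show ?thesis using h1 h2 h3 by (smt (verit))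
  next
    case False
    have "(1 + K) powr b \<le> (2 * K) powr b" using False K0 b by (intro powr_mono2) auto
    also have "\<dots> = 2 powr b * K powr b" by (simp add: powr_mult)
    also have "\<dots> \<le> 2 * K powr b" using b by (intro mult_right_mono) (auto intro: order_trans[OF powr_mono[of b 1 2]])
    finally show ?thesis by simp
  qed
  finally have xb2: "x powr b \<le> 2 * (1 + K powr b)" .
  have "cc powr (2/q) * K powr b = cc powr (2/q + b) * 2 powr (real n * q * b)"
    by (simp add: K_def powr_mult powr_add powr_powr)
  also have "2/q + b = 1" by (simp add: b_def)
  also have "real n * q * b = real n * (q - 2)" using q by (simp add: b_def field_simps)
  finally have ck: "cc powr (2/q) * K powr b = cc * 2 powr (real n * (q - 2))" using cc by simp
  have "cc powr (2/q) * x powr b \<le> cc powr (2/q) * (2 * (1 + K powr b))"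
    using xb2 by (intro mult_left_mono) auto
  also have "\<dots> = 2 * (cc powr (2/q) + cc powr (2/q) * K powr b)" by (simp add: algebra_simps)
  also have "\<dots> = 2 * (cc powr (2/q) + 2 powr (real n * (q - 2)) * cc)" using ck by (simp add: mult.commute)
  finally show ?thesis unfolding b_def .
qed


context
  fixes X :: "real \<Rightarrow> real^'d" and T q :: real and c :: "real \<Rightarrow> real \<Rightarrow> real" and n :: nat and s t :: real
  assumes rc: "\<forall>t\<in>{0..<T}. (X \<longlongrightarrow> X t) (at_right t)"
    and ct: "ctrl T q X c" and q2: "2 < q" and q3: "q < 3"
    and s0: "0 \<le> s" and st: "s < t" and tT: "t \<le> T"
begin

abbreviation "ta k \<equiv> tau T X n k"

lemma T0: "0 \<le> T" using s0 st tT by linarith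

lemma ta_cases: "ta k = \<infinity> \<or> (\<exists>a. ta k = ereal a \<and> 0 \<le> a \<and> a \<le> T)"
proof (cases "ta k")
  case (real a)
  then show ?thesis using tau_nonneg[of T X n k] tau_le_T[OF T0 real] by auto
next
  case PInf then show ?thesis by simp
next
  case MInf then show ?thesis using tau_nonneg[of T X n k] by simp
qed

definition "NN = nat \<lceil>c 0 T / (2 powr (- real n)) powr q\<rceil> + 1"

lemma ta_N: "NN \<le> k \<Longrightarrow> ta k = \<infinity>"
proof (rule ccontr)
  assume k: "NN \<le> k" and ne: "ta k \<noteq> \<infinity>"
  then obtain b where b: "ta k = ereal b" "0 \<le> b" "b \<le> T" using ta_cases[of k] by auto
  have t0: "ta 0 = ereal 0" by (simp add: zero_ereal_def)
  have "real (k - 0) * (2 powr (- real n)) powr q \<le> c 0 b"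
    using tau_count[OF rc ct _ T0 t0, of k] q2 b by auto
  also have "c 0 b \<le> c 0 T" using b T0 by (intro ctrl_mono[OF ct]) auto
  finally have "real k * (2 powr (- real n)) powr q \<le> c 0 T" by simp
  moreover have "0 < (2 powr (- real n)) powr q" by simp
  ultimately have "real k \<le> c 0 T / (2 powr (- real n)) powr q" by (simp add: field_simps)
  moreover have "c 0 T / (2 powr (- real n)) powr q < real NN" unfolding NN_def by linarith
  ultimately show False using k by simp
qed

lemma dyadic_finite:
  "dyadic_int T X n u = (\<Sum>k<NN. X (real_of_ereal (ta k)) \<otimes>\<^sub>t (Xstop X (ta (Suc k)) u - Xstop X (ta k) u))"
  unfolding dyadic_int_def
proof (rule suminf_finite)
  fix k assume "k \<notin> {..<NN}"
  then have "ta k = \<infinity>" "ta (Suc k) = \<infinity>" using ta_N by auto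
  then show "X (real_of_ereal (ta k)) \<otimes>\<^sub>t (Xstop X (ta (Suc k)) u - Xstop X (ta k) u) = 0"
    by simp
qed simp

definition "QQ k = (if ta k \<le> ereal s then s else if ta k < ereal t then real_of_ereal (ta k) else t)"

lemma QQ_range: "s \<le> QQ k \<and> QQ k \<le> t"
  using ta_cases[of k] st by (auto simp: QQ_def)

lemma Xstop_QQ: "Xstop X (ta k) t - Xstop X (ta k) s = X (QQ k) - X s"
  using ta_cases[of k] st by (auto simp: QQ_def Xstop_def min_def)

lemma QQ_0: "QQ 0 = s" using s0 by (simp add: QQ_def zero_ereal_def)
lemma QQ_N: "QQ NN = t" using ta_N[of NN] by (simp add: QQ_def)

lemma QQ_mono: "i \<le> j \<Longrightarrow> QQ i \<le> QQ j"
proof -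
  assume ij: "i \<le> j"
  have m: "ta i \<le> ta j" using tau_mono[OF rc ij] .
  show ?thesis
    using ta_cases[of i] ta_cases[of j] m QQ_range[of i] QQ_range[of j]
    by (auto simp: QQ_def)
qed

lemma D_eq:
  "dyadic_int T X n t - dyadic_int T X n s - X s \<otimes>\<^sub>t (X t - X s)
   = (\<Sum>k<NN. (X (real_of_ereal (ta k)) - X s) \<otimes>\<^sub>t (X (QQ (Suc k)) - X (QQ k)))"
proof -
  have "dyadic_int T X n t - dyadic_int T X n s =
    (\<Sum>k<NN. X (real_of_ereal (ta k)) \<otimes>\<^sub>t (X (QQ (Suc k)) - X (QQ k)))"
    unfolding dyadic_finite sum_subtractf[symmetric]
  proof (rule sum.cong[OF refl])
    fix k
    have "(Xstop X (ta (Suc k)) t - Xstop X (ta k) t) - (Xstop X (ta (Suc k)) s - Xstop X (ta k) s)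
       = (Xstop X (ta (Suc k)) t - Xstop X (ta (Suc k)) s) - (Xstop X (ta k) t - Xstop X (ta k) s)"
      by (simp add: algebra_simps)
    also have "\<dots> = X (QQ (Suc k)) - X (QQ k)" unfolding Xstop_QQ by simp
    finally show "X (real_of_ereal (ta k)) \<otimes>\<^sub>t (Xstop X (ta (Suc k)) t - Xstop X (ta k) t) -
         X (real_of_ereal (ta k)) \<otimes>\<^sub>t (Xstop X (ta (Suc k)) s - Xstop X (ta k) s) =
         X (real_of_ereal (ta k)) \<otimes>\<^sub>t (X (QQ (Suc k)) - X (QQ k))"
      by (simp add: tensor_diff_right[symmetric])
  qed
  moreover have "X t - X s = (\<Sum>k<NN. X (QQ (Suc k)) - X (QQ k))"
    using sum_lessThan_telescope[of "\<lambda>k. X (QQ k)" NN] by (simp add: QQ_0 QQ_N)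
  ultimately show ?thesis
    by (simp add: tensor_sum_right sum_subtractf[symmetric] tensor_diff_left)
qed


definition "j0 = Max {k. ta k \<le> ereal s}"
definition "j1 = (LEAST k. ereal t \<le> ta k)"

lemma ereal_contra: "ereal t \<le> x \<Longrightarrow> x \<le> ereal s \<Longrightarrow> False"
proof -
  assume "ereal t \<le> x" "x \<le> ereal s"
  then have "ereal t \<le> ereal s" by (rule order_trans)
  then show False using st by simp
qed

lemma fin0: "finite {k. ta k \<le> ereal s}"
proof (rule finite_subset[of _ "{..<NN}"])
  show "{k. ta k \<le> ereal s} \<subseteq> {..<NN}"
  proof
    fix k assume "k \<in> {k. ta k \<le> ereal s}"
    then show "k \<in> {..<NN}" using ta_N[of k] by (cases "NN \<le> k") auto
  qed
qed simp

lemma j0_in: "ta j0 \<le> ereal s" and j0_N: "j0 < NN"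
proof -
  have "0 \<in> {k. ta k \<le> ereal s}" using s0 by (simp add: zero_ereal_def)
  then have "j0 \<in> {k. ta k \<le> ereal s}" unfolding j0_def using fin0 by (intro Max_in) blast+
  then show "ta j0 \<le> ereal s" by simp
  then show "j0 < NN" using ta_N[of j0] by (cases "NN \<le> j0") auto
qed

lemma j0_gt: "j0 < k \<Longrightarrow> ereal s < ta k"
proof (rule ccontr)
  assume "j0 < k" "\<not> ereal s < ta k"
  then have "k \<in> {k. ta k \<le> ereal s}" by simp
  then have "k \<le> j0" unfolding j0_def using fin0 by (intro Max_ge) auto
  then show False using \<open>j0 < k\<close> by simp
qed

lemma j0_le: "k \<le> j0 \<Longrightarrow> ta k \<le> ereal s"
  using tau_mono[OF rc, of k j0, where n=n] j0_in by (meson order_trans)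

lemma j1_in: "ereal t \<le> ta j1" and j1_N: "j1 \<le> NN"
proof -
  have "ereal t \<le> ta NN" using ta_N[of NN] by simp
  then show "ereal t \<le> ta j1" "j1 \<le> NN" unfolding j1_def by (auto intro: Least_le LeastI)
qed

lemma j1_lt: "k < j1 \<Longrightarrow> ta k < ereal t"
  unfolding j1_def using not_less_Least[of k "\<lambda>k. ereal t \<le> ta k"] by simp

lemma j1_ge: "j1 \<le> k \<Longrightarrow> ereal t \<le> ta k"
  using tau_mono[OF rc, of j1 k, where n=n] j1_in by (meson order_trans)

lemma j01: "j0 < j1"
proof (rule ccontr)
  assume "\<not> j0 < j1"
  then have "ereal t \<le> ta j0" using j1_ge by simp
  then show False using j0_in by (rule ereal_contra)
qed

lemma QQ_s: "ta k \<le> ereal s \<Longrightarrow> QQ k = s" by (simp add: QQ_def)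
lemma QQ_t: "ereal t \<le> ta k \<Longrightarrow> QQ k = t" using ereal_contra[of "ta k"] by (auto simp: QQ_def)

lemma E_eq:
  "(\<Sum>k<NN. (X (real_of_ereal (ta k)) - X (QQ k)) \<otimes>\<^sub>t (X (QQ (Suc k)) - X (QQ k)))
   = (X (real_of_ereal (ta j0)) - X s) \<otimes>\<^sub>t (X (QQ (Suc j0)) - X s)"
proof -
  have "(\<Sum>k<NN. (X (real_of_ereal (ta k)) - X (QQ k)) \<otimes>\<^sub>t (X (QQ (Suc k)) - X (QQ k)))
    = (\<Sum>k\<in>{j0}. (X (real_of_ereal (ta k)) - X (QQ k)) \<otimes>\<^sub>t (X (QQ (Suc k)) - X (QQ k)))"
  proof (rule sum.mono_neutral_right)
    show "{j0} \<subseteq> {..<NN}" using j0_N by simp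
    show "\<forall>k\<in>{..<NN} - {j0}. (X (real_of_ereal (ta k)) - X (QQ k)) \<otimes>\<^sub>t (X (QQ (Suc k)) - X (QQ k)) = 0"
    proof
      fix k assume "k \<in> {..<NN} - {j0}"
      then consider "k < j0" | "j0 < k" by force
      then show "(X (real_of_ereal (ta k)) - X (QQ k)) \<otimes>\<^sub>t (X (QQ (Suc k)) - X (QQ k)) = 0"
      proof cases
        case 1
        then show ?thesis using QQ_s[OF j0_le[of k]] QQ_s[OF j0_le[of "Suc k"]] by simp
      next
        case 2
        have gs: "ereal s < ta k" using j0_gt[OF 2] .
        show ?thesis
        proof (cases "ta k < ereal t")
          case True
          then have "QQ k = real_of_ereal (ta k)" using gs by (auto simp: QQ_def)
          then show ?thesis by simp
        next
          case False
          then have "ereal t \<le> ta (Suc k)" using tau_mono[OF rc, of k "Suc k", where n=n] by (meson order_trans not_le le_SucI order_refl)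
          then show ?thesis using QQ_t[of k] QQ_t[of "Suc k"] False by simp
        qed
      qed
    qed
  qed simp
  then show ?thesis using QQ_s[OF j0_in] by simp
qed

lemma S_eq:
  "(\<Sum>k<NN. (X (QQ k) - X s) \<otimes>\<^sub>t (X (QQ (Suc k)) - X (QQ k)))
   = Sw X (\<lambda>i. QQ (j0 + i)) (j1 - j0)"
proof -
  have "(\<Sum>k<NN. (X (QQ k) - X s) \<otimes>\<^sub>t (X (QQ (Suc k)) - X (QQ k)))
    = (\<Sum>k\<in>{j0..<j1}. (X (QQ k) - X s) \<otimes>\<^sub>t (X (QQ (Suc k)) - X (QQ k)))"
  proof (rule sum.mono_neutral_right)
    show "{j0..<j1} \<subseteq> {..<NN}" using j1_N by auto
    show "\<forall>k\<in>{..<NN} - {j0..<j1}. (X (QQ k) - X s) \<otimes>\<^sub>t (X (QQ (Suc k)) - X (QQ k)) = 0"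
    proof
      fix k assume "k \<in> {..<NN} - {j0..<j1}"
      then consider "k < j0" | "j1 \<le> k" by force
      then show "(X (QQ k) - X s) \<otimes>\<^sub>t (X (QQ (Suc k)) - X (QQ k)) = 0"
      proof cases
        case 1
        then show ?thesis using QQ_s[OF j0_le[of k]] QQ_s[OF j0_le[of "Suc k"]] by simp
      next
        case 2
        then show ?thesis using QQ_t[OF j1_ge[of k]] QQ_t[OF j1_ge[of "Suc k"]] by simp
      qed
    qed
  qed simp
  also have "\<dots> = (\<Sum>i\<in>{0..<j1 - j0}. (X (QQ (i + j0)) - X s) \<otimes>\<^sub>t (X (QQ (Suc (i + j0))) - X (QQ (i + j0))))"
    using sum.shift_bounds_nat_ivl[of "\<lambda>k. (X (QQ k) - X s) \<otimes>\<^sub>t (X (QQ (Suc k)) - X (QQ k))" 0 j0 "j1 - j0"] j01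
    by simp
  also have "\<dots> = Sw X (\<lambda>i. QQ (j0 + i)) (j1 - j0)"
    unfolding Sw_def atLeast0LessThan using QQ_s[OF j0_in] by (simp add: add.commute)
  finally show ?thesis .
qed


lemma cst_nn: "0 \<le> c s t" using s0 st tT by (intro ctrl_nonneg[OF ct]) auto

lemma E_bound:
  "norm ((X (real_of_ereal (ta j0)) - X s) \<otimes>\<^sub>t (X (QQ (Suc j0)) - X s)) \<le> 2 powr (- real n) * c s t powr (1/q)"
proof -
  obtain a where a: "ta j0 = ereal a" "0 \<le> a" using ta_cases[of j0] j0_in by auto
  have as: "a \<le> s" using j0_in a by simp
  have n1: "norm (X s - X a) < 2 powr (- real n)"
    using tau_below[OF a(1), of s] s0 st tT as j0_gt[of "Suc j0"] by auto
  have qs: "s \<le> QQ (Suc j0)" "QQ (Suc j0) \<le> t" using QQ_range by auto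
  have "norm (X (QQ (Suc j0)) - X s) \<le> c s (QQ (Suc j0)) powr (1/q)"
    using qs s0 tT q2 by (intro ctrl_norm[OF ct]) auto
  also have "\<dots> \<le> c s t powr (1/q)"
    using qs s0 tT q2 ctrl_nonneg[OF ct, of s "QQ (Suc j0)"] ctrl_mono[OF ct, of s s "QQ (Suc j0)" t]
    by (intro powr_mono2) auto
  finally have n2: "norm (X (QQ (Suc j0)) - X s) \<le> c s t powr (1/q)" .
  show ?thesis unfolding norm_tensor a(1)
    using n1 n2 by (simp add: norm_minus_commute mult_mono)
qed

lemma S_bound:
  "norm (Sw X (\<lambda>i. QQ (j0 + i)) (j1 - j0)) \<le>
     (2 powr (2/q) / (1 - 2/q)) * c s t powr (2/q) * (real (j1 - j0) - 1) powr (1 - 2/q)"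
proof -
  have m1: "1 \<le> j1 - j0" using j01 by simp
  have Q0: "QQ (j0 + 0) = s" using QQ_s[OF j0_in] by simp
  have Qm: "QQ (j0 + (j1 - j0)) = t" using QQ_t[OF j1_in] j01 by simp
  have "0 \<le> QQ (j0 + 0) \<and> QQ (j0 + (j1 - j0)) \<le> T \<and>
      (\<forall>i j. i \<le> j \<longrightarrow> j \<le> j1 - j0 \<longrightarrow> QQ (j0 + i) \<le> QQ (j0 + j))"
    using Q0 Qm s0 tT QQ_mono by auto
  from sewing[OF ct q2 m1, rule_format, OF this] show ?thesis by (simp only: Q0 Qm)
qed

lemma count: "real (j1 - j0) - 1 \<le> 1 + c s t * 2 powr (real n * q)"
proof (cases "j1 - j0 \<ge> 2")
  case False
  then have "real (j1 - j0) \<le> 1" by simp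
  moreover have "0 \<le> c s t * 2 powr (real n * q)" using cst_nn by simp
  ultimately show ?thesis by linarith
next
  case True
  have lt1: "Suc j0 < j1" using True by simp
  obtain a where a: "ta (Suc j0) = ereal a" using ta_cases[of "Suc j0"] j1_lt[OF lt1] by auto
  have sa: "s < a" using j0_gt[of "Suc j0"] a by simp
  have j1p: "j1 - 1 < j1" "Suc j0 \<le> j1 - 1" using lt1 by auto
  obtain b where b: "ta (j1 - 1) = ereal b" using ta_cases[of "j1 - 1"] j1_lt[OF j1p(1)] by auto
  have bt: "b < t" using j1_lt[OF j1p(1)] b by simp
  have ab: "a \<le> b" using tau_mono[OF rc j1p(2), where n=n] a b by simp
  have "real (j1 - 1 - Suc j0) * (2 powr (- real n)) powr q \<le> c a b"
    using tau_count[OF rc ct _ T0 a j1p(2)] q2 b by auto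
  also have "\<dots> \<le> c s t" using sa ab bt s0 tT by (intro ctrl_mono[OF ct]) auto
  finally have 1: "real (j1 - 1 - Suc j0) * 2 powr (- (real n * q)) \<le> c s t"
    by (simp add: powr_powr)
  have e: "2 powr (- (real n * q)) * 2 powr (real n * q) = 1"
    by (simp add: powr_add[symmetric])
  have "real (j1 - 1 - Suc j0) = real (j1 - 1 - Suc j0) * 2 powr (- (real n * q)) * 2 powr (real n * q)"
    using e by simp
  also have "\<dots> \<le> c s t * 2 powr (real n * q)" using 1 by (intro mult_right_mono) auto
  finally have "real (j1 - 1 - Suc j0) \<le> c s t * 2 powr (real n * q)" .
  moreover have "real (j1 - 1 - Suc j0) = real (j1 - j0) - 2" using lt1 by simp
  ultimately show ?thesis by simp
qed


lemma main_bound: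
  "norm (dyadic_int T X n t - dyadic_int T X n s - X s \<otimes>\<^sub>t (X t - X s))
   \<le> (1 + 2 * (2 powr (2/q) / (1 - 2/q))) *
      max (2 powr (- real n) * c s t powr (1/q)) (2 powr (real n * (q - 2)) * c s t + c s t powr (2/q))"
proof -
  define A where "A = 2 powr (2/q) / (1 - 2/q)"
  have A0: "0 \<le> A" using q2 by (simp add: A_def)
  define M where "M = max (2 powr (- real n) * c s t powr (1/q)) (2 powr (real n * (q - 2)) * c s t + c s t powr (2/q))"
  have sp: "\<And>k. (X (real_of_ereal (ta k)) - X s) \<otimes>\<^sub>t (X (QQ (Suc k)) - X (QQ k))
     = (X (real_of_ereal (ta k)) - X (QQ k)) \<otimes>\<^sub>t (X (QQ (Suc k)) - X (QQ k))
       + (X (QQ k) - X s) \<otimes>\<^sub>t (X (QQ (Suc k)) - X (QQ k))"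
    by (simp add: tensor_add_left[symmetric])
  have D: "dyadic_int T X n t - dyadic_int T X n s - X s \<otimes>\<^sub>t (X t - X s)
     = (X (real_of_ereal (ta j0)) - X s) \<otimes>\<^sub>t (X (QQ (Suc j0)) - X s) + Sw X (\<lambda>i. QQ (j0 + i)) (j1 - j0)"
    unfolding D_eq sp sum.distrib E_eq S_eq ..
  have xb: "real (j1 - j0) - 1 \<le> 1 + c s t * 2 powr (real n * q)" by (rule count)
  have x0: "0 \<le> real (j1 - j0) - 1" using j01 by simp
  have fa: "c s t powr (2/q) * (real (j1 - j0) - 1) powr (1 - 2/q)
      \<le> 2 * (c s t powr (2/q) + 2 powr (real n * (q - 2)) * c s t)"
    by (rule final_arith[OF q2 cst_nn x0 xb])
  have Sb: "norm (Sw X (\<lambda>i. QQ (j0 + i)) (j1 - j0)) \<le> A * (2 * (c s t powr (2/q) + 2 powr (real n * (q - 2)) * c s t))"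
    using S_bound mult_left_mono[OF fa A0] by (simp add: A_def mult.assoc)
  have M2: "c s t powr (2/q) + 2 powr (real n * (q - 2)) * c s t \<le> M" unfolding M_def by simp
  have M1: "2 powr (- real n) * c s t powr (1/q) \<le> M" unfolding M_def by simp
  have "norm (dyadic_int T X n t - dyadic_int T X n s - X s \<otimes>\<^sub>t (X t - X s))
     \<le> norm ((X (real_of_ereal (ta j0)) - X s) \<otimes>\<^sub>t (X (QQ (Suc j0)) - X s)) + norm (Sw X (\<lambda>i. QQ (j0 + i)) (j1 - j0))"
    unfolding D by (rule norm_triangle_ineq)
  also have "\<dots> \<le> M + A * (2 * M)"
    using E_bound Sb M1 mult_left_mono[OF M2, of "2 * A"] A0 by (simp add: algebra_simps)
  also have "\<dots> = (1 + 2 * A) * M" by (simp add: algebra_simps)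
  finally show ?thesis unfolding M_def A_def .
qed

end

theorem lemma3p2:
  fixes X :: "real \<Rightarrow> real^'d" and T q :: real
  assumes "cadlag T X"
    and "\<forall>p>2. finite_pvar p T X"
    and "2 < q" and "q < 3"
  shows "\<exists>C>0. \<forall>c :: real \<Rightarrow> real \<Rightarrow> real.
    superadditive T c \<and>
    (\<forall>s t. 0 \<le> s \<and> s \<le> t \<and> t \<le> T \<longrightarrow> 0 \<le> c s t) \<and>
    (\<forall>s t. 0 \<le> s \<and> s \<le> t \<and> t \<le> T \<longrightarrow> norm (X t - X s) powr q \<le> c s t)
    \<longrightarrow> (\<forall>n::nat. \<forall>s t. 0 \<le> s \<and> s \<le> t \<and> t \<le> T \<longrightarrow>
          norm (dyadic_int T X n t - dyadic_int T X n s - X s \<otimes>\<^sub>t (X t - X s))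
          \<le> C * max (2 powr (- real n) * c s t powr (1/q))
                    (2 powr (real n * (q - 2)) * c s t + c s t powr (2/q)))"
proof -
  have rc: "\<forall>t\<in>{0..<T}. (X \<longlongrightarrow> X t) (at_right t)" using assms(1) by (simp add: cadlag_def)
  define C where "C = 1 + 2 * (2 powr (2/q) / (1 - 2/q))"
  have C0: "0 < C" using assms(3) unfolding C_def by (simp add: add_pos_nonneg)
  show ?thesis
  proof (rule exI[of _ C], intro conjI allI impI)
    show "0 < C" by (rule C0)
    fix c :: "real \<Rightarrow> real \<Rightarrow> real" and n :: nat and s t :: real
    assume H: "superadditive T c \<and>
      (\<forall>s t. 0 \<le> s \<and> s \<le> t \<and> t \<le> T \<longrightarrow> 0 \<le> c s t) \<and>
      (\<forall>s t. 0 \<le> s \<and> s \<le> t \<and> t \<le> T \<longrightarrow> norm (X t - X s) powr q \<le> c s t)"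
      and st: "0 \<le> s \<and> s \<le> t \<and> t \<le> T"
    have ct: "ctrl T q X c" using H by (simp add: ctrl_def)
    show "norm (dyadic_int T X n t - dyadic_int T X n s - X s \<otimes>\<^sub>t (X t - X s))
          \<le> C * max (2 powr (- real n) * c s t powr (1/q))
                    (2 powr (real n * (q - 2)) * c s t + c s t powr (2/q))"
    proof (cases "s = t")
      case True
      have "0 \<le> max (2 powr (- real n) * c s t powr (1/q))
                    (2 powr (real n * (q - 2)) * c s t + c s t powr (2/q))"
        by (simp add: le_max_iff_disj)
      then show ?thesis using True C0 by simp
    next
      case False
      then have lt: "s < t" using st by simp
      show ?thesis
        using main_bound[OF rc ct assms(3,4), of s t n] st lt by (simp add: C_def)
    qed
  qed
qed

end
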